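(* Let $q$ be odd with $q\equiv1\pmod4$ fixed. Then, as $g\to\infty$, $$\sum_{\substack{P\text{ monic irreducible}\\ \deg P=2g+1}}\ \sum_{n=0}^{g}\ \sum_{\substack{f\text{ monic},\ \deg f=n\\ f=\square}}\chi_P(f)\,q^{-n/2}=\frac{|P|}{\log_q|P|}\left(\left[\frac g2\right]+1\right)+O\!\left(\frac{\sqrt{|P|}}{\log_q|P|}\,g\right),$$ where $|P|=q^{2g+1}$, $\log_q|P|=2g+1$, and $[x]$ is the integer part of $x$.
   Context: $A=\mathbb{F}_q[T]$; for nonzero $f\in A$, $|f|=q^{\deg f}$. "$f=\square$" means $f$ is the square of a monic polynomial. For a monic irreducible $Q$ and $a\in A$, $\left(\frac{a}{Q}\right)$ is $0$ if $Q\mid a$, $1$ if $a$ is a nonzero square mod $Q$, $-1$ otherwise; extended to monic $f=\prod Q_i^{e_i}$ by $\left(\frac{a}{f}\right)=\prod\left(\frac{a}{Q_i}\right)^{e_i}$, $\left(\frac{a}{1}\right)=1$. For monic irreducible $P$, $\chi_P(f)=\left(\frac{P}{f}\right)$. Implied constants may depend on $q$. *)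

theory Defs
  imports "HOL-Computational_Algebra.Computational_Algebra" "HOL-Library.Landau_Symbols"
begin

definition poly_legendre :: "'a::field poly \<Rightarrow> 'a poly \<Rightarrow> int" where
  "poly_legendre a Q =
     (if Q dvd a then 0 else if (\<exists>b. Q dvd (b ^ 2 - a)) then 1 else -1)"

text \<open>Extension to monic f = prod Q_i^e_i (multiplicatively); (a/1) = 1.
  Over a field, prime_factorization yields the monic irreducible factors.\<close>
definition poly_jacobi :: "'a::field_gcd poly \<Rightarrow> 'a poly \<Rightarrow> int" where
  "poly_jacobi a f = (\<Prod>Q\<in>#prime_factorization f. poly_legendre a Q)"

definition chi :: "'a::field_gcd poly \<Rightarrow> 'a poly \<Rightarrow> int" where
  "chi P f = poly_jacobi P f"

definition monic :: "'a::field poly \<Rightarrow> bool" where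
  "monic f \<longleftrightarrow> lead_coeff f = 1"

definition is_monic_square :: "'a::field poly \<Rightarrow> bool" where
  "is_monic_square f \<longleftrightarrow> (\<exists>h. monic h \<and> f = h ^ 2)"

end

theory Submission
  imports Defs
begin

lemma monic_set_eq:
  "{f::'a::field poly. monic f \<and> degree f = n} = (\<lambda>xs. Poly (xs @ [1])) ` {xs. set xs \<subseteq> UNIV \<and> length xs = n}"
proof (intro equalityI subsetI)
  fix f :: "'a poly" assume "f \<in> {f. monic f \<and> degree f = n}"
  hence m: "lead_coeff f = 1" "degree f = n" by (auto simp: monic_def)
  hence nz: "f \<noteq> 0" by auto
  hence ne: "coeffs f \<noteq> []" by simp
  have "last (coeffs f) = 1" using m nz by (simp add: last_coeffs_eq_coeff_degree)
  hence eq: "coeffs f = butlast (coeffs f) @ [1]" using ne by (metis append_butlast_last_id)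
  have len: "length (butlast (coeffs f)) = n" using m nz by (simp add: degree_eq_length_coeffs)
  have "f = Poly (butlast (coeffs f) @ [1])" by (metis eq Poly_coeffs)
  thus "f \<in> (\<lambda>xs. Poly (xs @ [1])) ` {xs. set xs \<subseteq> UNIV \<and> length xs = n}" using len by blast
next
  fix f :: "'a poly" assume "f \<in> (\<lambda>xs. Poly (xs @ [1])) ` {xs. set xs \<subseteq> UNIV \<and> length xs = n}"
  then obtain xs where f: "f = Poly (xs @ [1])" and len: "length xs = n" by auto
  have c: "coeffs f = xs @ [1]" unfolding f coeffs_Poly by simp
  have "f \<noteq> 0" using c by auto
  hence "degree f = n" using c len by (simp add: degree_eq_length_coeffs)
  moreover have "lead_coeff f = 1" using c \<open>f \<noteq> 0\<close>
    by (metis last_coeffs_eq_coeff_degree last_snoc)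
  ultimately show "f \<in> {f. monic f \<and> degree f = n}" by (simp add: monic_def)
qed

lemma inj_Poly_snoc: "inj (\<lambda>xs::'a::zero_neq_one list. Poly (xs @ [1]))"
proof (rule injI)
  fix xs ys :: "'a list" assume "Poly (xs @ [1]) = Poly (ys @ [1])"
  hence "coeffs (Poly (xs @ [1])) = coeffs (Poly (ys @ [1]))" by simp
  thus "xs = ys" unfolding coeffs_Poly by simp
qed

lemma card_monic:
  "card {f::'a::{finite,field} poly. monic f \<and> degree f = n} = card (UNIV::'a set)^n"
  unfolding monic_set_eq
  by (subst card_image) (auto intro: inj_on_subset[OF inj_Poly_snoc] simp: card_lists_length_eq[of "UNIV::'a set", simplified])

lemma finite_monic: "finite {f::'a::{finite,field} poly. monic f \<and> degree f = n}"
  unfolding monic_set_eq by (intro finite_imageI finite_lists_length_eq) simp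
lemma monic_normalize: "monic (P::'a::field_gcd poly) \<Longrightarrow> normalize P = P"
  by (simp add: normalize_poly_def monic_def one_pCons[symmetric])

lemma monic_irr_prime: "monic (P::'a::field_gcd poly) \<Longrightarrow> irreducible P \<Longrightarrow> prime P"
  by (simp add: prime_def monic_normalize irreducible_imp_prime_elem)

lemma prime_monic: "prime (P::'a::field_gcd poly) \<Longrightarrow> monic P"
proof -
  assume p: "prime P"
  hence nz: "P \<noteq> 0" by auto
  have "unit_factor P = 1" using p by (rule unit_factor_prime)
  hence "[:unit_factor (lead_coeff P):] = [:1:]" by (simp add: unit_factor_poly_def one_pCons)
  hence u: "unit_factor (lead_coeff P) = 1" by simp
  have "lead_coeff P dvd 1" using nz by (simp add: dvd_field_iff)
  hence "unit_factor (lead_coeff P) = lead_coeff P" by (rule is_unit_unit_factor)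
  thus "monic P" using u by (simp add: monic_def)
qed
definition IrrLe :: "nat \<Rightarrow> 'a::field_gcd poly set" where
  "IrrLe N = {P. monic P \<and> irreducible P \<and> degree P \<le> N}"

lemma finite_monic_le: "finite {f::'a::{finite,field} poly. monic f \<and> degree f \<le> N}"
proof -
  have "{f::'a poly. monic f \<and> degree f \<le> N} = (\<Union>n\<in>{..N}. {f. monic f \<and> degree f = n})" by auto
  thus ?thesis by (metis (no_types) finite_UN_I finite_atMost finite_monic)
qed

lemma finite_IrrLe: "finite (IrrLe N :: 'a::{finite,field_gcd} poly set)"
  by (rule finite_subset[OF _ finite_monic_le[of N]]) (auto simp: IrrLe_def)

lemma irr_degree_pos: "irreducible (P::'a::field poly) \<Longrightarrow> degree P \<ge> 1"
proof (rule ccontr)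
  assume i: "irreducible P" and "\<not> degree P \<ge> 1"
  hence "degree P = 0" by simp
  moreover have "P \<noteq> 0" using i by auto
  ultimately have "is_unit P" by (simp add: is_unit_iff_degree)
  thus False using i by (simp add: irreducible_def)
qed

lemma mult_sum:
  fixes f P :: "'a::field_gcd poly"
  assumes f: "f \<noteq> 0" "degree f \<le> N" and P: "irreducible P"
  shows "(\<Sum>k\<in>{1..N}. if P ^ k dvd f then degree P else 0) = multiplicity P f * degree P"
proof -
  have nu: "\<not> is_unit P" using P by (simp add: irreducible_def)
  have d1: "degree P \<ge> 1" using P by (rule irr_degree_pos)
  have "degree (P ^ multiplicity P f) \<le> degree f"
    using f(1) by (intro dvd_imp_degree_le multiplicity_dvd) auto
  moreover have "P \<noteq> 0" using P by auto
  ultimately have "multiplicity P f * degree P \<le> N" using f(2) by (simp add: degree_power_eq)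
  hence mN: "multiplicity P f \<le> N" using d1
    by (metis le_trans mult.right_neutral mult_le_mono2)
  have "(\<Sum>k\<in>{1..N}. if P ^ k dvd f then degree P else 0) =
        (\<Sum>k\<in>{1..N}. if k \<le> multiplicity P f then degree P else 0)"
    using power_dvd_iff_le_multiplicity[OF f(1) nu] by simp
  also have "\<dots> = (\<Sum>k\<in>{k\<in>{1..N}. k \<le> multiplicity P f}. degree P)"
    by (rule sum.inter_filter[symmetric]) simp
  also have "{k\<in>{1..N}. k \<le> multiplicity P f} = {1..multiplicity P f}" using mN by auto
  finally show ?thesis by simp
qed

lemma degree_decomp:
  fixes f :: "'a::{finite,field_gcd} poly"
  assumes m: "monic f" and d: "degree f = N"
  shows "degree f = (\<Sum>P\<in>IrrLe N. \<Sum>k\<in>{1..N}. if P ^ k dvd f then degree P else 0)"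
proof -
  have f0: "f \<noteq> 0" using m by (auto simp: monic_def)
  have "degree f = degree (\<Prod>p\<in>prime_factors f. p ^ multiplicity p f)"
    using prod_prime_factors[OF f0] monic_normalize[OF m] by simp
  also have "\<dots> = (\<Sum>p\<in>prime_factors f. degree (p ^ multiplicity p f))"
    by (rule degree_prod_eq_sum_degree) auto
  also have "\<dots> = (\<Sum>p\<in>prime_factors f. multiplicity p f * degree p)"
    by (rule sum.cong) (auto simp: degree_power_eq in_prime_factors_iff)
  also have "\<dots> = (\<Sum>p\<in>IrrLe N. multiplicity p f * degree p)"
  proof (rule sum.mono_neutral_left[OF finite_IrrLe])
    show "prime_factors f \<subseteq> IrrLe N"
    proof
      fix p assume p: "p \<in> prime_factors f"
      hence pp: "prime p" and pd: "p dvd f" by (auto simp: in_prime_factors_iff)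
      have "degree p \<le> degree f" using pd f0 by (rule dvd_imp_degree_le)
      thus "p \<in> IrrLe N" using pp d prime_monic[OF pp]
        by (auto simp: IrrLe_def prime_elem_imp_irreducible prime_def)
    qed
    show "\<forall>i\<in>IrrLe N - prime_factors f. multiplicity i f * degree i = 0"
    proof
      fix p assume "p \<in> IrrLe N - prime_factors f"
      hence p: "monic p" "irreducible p" "p \<notin> prime_factors f" by (auto simp: IrrLe_def)
      have "prime p" using p(1,2) by (rule monic_irr_prime)
      hence "\<not> p dvd f" using p(3) f0 by (auto simp: in_prime_factors_iff)
      thus "multiplicity p f * degree p = 0" by (simp add: not_dvd_imp_multiplicity_0)
    qed
  qed
  also have "\<dots> = (\<Sum>P\<in>IrrLe N. \<Sum>k\<in>{1..N}. if P ^ k dvd f then degree P else 0)"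
    using mult_sum[OF f0] d by (auto simp: IrrLe_def intro!: sum.cong)
  finally show ?thesis .
qed
lemma card_multiples:
  fixes P :: "'a::{finite,field_gcd} poly"
  assumes P: "monic P"
  shows "card {f. monic f \<and> degree f = N \<and> P ^ k dvd f} =
         (if k * degree P \<le> N then card (UNIV::'a set) ^ (N - k * degree P) else 0)"
proof -
  have P0: "P \<noteq> 0" using P by (auto simp: monic_def)
  have Pk0: "P ^ k \<noteq> 0" using P0 by simp
  have lPk: "lead_coeff (P ^ k) = 1" using P by (simp add: monic_def lead_coeff_power)
  have dPk: "degree (P ^ k) = k * degree P" by (simp add: degree_power_eq P0)
  show ?thesis
  proof (cases "k * degree P \<le> N")
    case True
    have "{f. monic f \<and> degree f = N \<and> P ^ k dvd f} =
          (\<lambda>g. P ^ k * g) ` {g. monic g \<and> degree g = N - k * degree P}"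
    proof (intro equalityI subsetI)
      fix f assume "f \<in> {f. monic f \<and> degree f = N \<and> P ^ k dvd f}"
      hence f: "monic f" "degree f = N" "P ^ k dvd f" by auto
      then obtain g where g: "f = P ^ k * g" by (auto elim: dvdE)
      have g0: "g \<noteq> 0" using f(1) g by (auto simp: monic_def)
      have "lead_coeff g = 1" using f(1) g lPk by (simp add: monic_def lead_coeff_mult)
      moreover have "degree g = N - k * degree P" using f(2) g g0 Pk0 dPk
        by (simp add: degree_mult_eq)
      ultimately show "f \<in> (\<lambda>g. P ^ k * g) ` {g. monic g \<and> degree g = N - k * degree P}"
        using g by (auto simp: monic_def)
    next
      fix f assume "f \<in> (\<lambda>g. P ^ k * g) ` {g. monic g \<and> degree g = N - k * degree P}"
      then obtain g where g: "f = P ^ k * g" "monic g" "degree g = N - k * degree P" by auto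
      have g0: "g \<noteq> 0" using g by (auto simp: monic_def)
      have "lead_coeff f = 1" using g lPk by (simp add: monic_def lead_coeff_mult)
      moreover have "degree f = N" using g g0 Pk0 dPk True by (simp add: degree_mult_eq)
      ultimately show "f \<in> {f. monic f \<and> degree f = N \<and> P ^ k dvd f}" using g by (auto simp: monic_def)
    qed
    moreover have "inj_on (\<lambda>g. P ^ k * g) {g. monic g \<and> degree g = N - k * degree P}"
      using Pk0 by (auto intro: inj_onI)
    ultimately show ?thesis using True by (simp add: card_image card_monic)
  next
    case False
    have "{f. monic f \<and> degree f = N \<and> P ^ k dvd f} = {}"
    proof (rule ccontr)
      assume "{f. monic f \<and> degree f = N \<and> P ^ k dvd f} \<noteq> {}"
      then obtain f where f: "monic f" "degree f = N" "P ^ k dvd f" by auto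
      have "f \<noteq> 0" using f by (auto simp: monic_def)
      hence "degree (P ^ k) \<le> degree f" using f(3) by (intro dvd_imp_degree_le)
      thus False using f(2) dPk False by simp
    qed
    thus ?thesis using False by (simp only: card.empty if_False)
  qed
qed
definition Irr :: "nat \<Rightarrow> 'a::field_gcd poly set" where
  "Irr d = {P. monic P \<and> irreducible P \<and> degree P = d}"

definition cc :: "nat \<Rightarrow> nat \<Rightarrow> nat \<Rightarrow> nat" where
  "cc q d N = (\<Sum>j\<in>{1..N}. if d dvd j then q ^ (N - j) else 0)"

lemma cc_reindex:
  assumes d: "d \<ge> 1"
  shows "(\<Sum>k\<in>{1..N}. if k * d \<le> N then q ^ (N - k * d) else 0) = cc q d N"
proof -
  have "(\<Sum>k\<in>{1..N}. if k * d \<le> N then q ^ (N - k * d) else 0) =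
        (\<Sum>k\<in>{k\<in>{1..N}. k * d \<le> N}. q ^ (N - k * d))"
    by (rule sum.inter_filter[symmetric]) simp
  also have "\<dots> = (\<Sum>j\<in>{j\<in>{1..N}. d dvd j}. q ^ (N - j))"
  proof (rule sum.reindex_bij_betw)
    show "bij_betw (\<lambda>k. k * d) {k \<in> {1..N}. k * d \<le> N} {j \<in> {1..N}. d dvd j}"
    proof (rule bij_betw_imageI)
      show "inj_on (\<lambda>k. k * d) {k \<in> {1..N}. k * d \<le> N}" using d by (auto intro: inj_onI)
      show "(\<lambda>k. k * d) ` {k \<in> {1..N}. k * d \<le> N} = {j \<in> {1..N}. d dvd j}"
      proof (intro equalityI subsetI)
        fix j assume "j \<in> (\<lambda>k. k * d) ` {k \<in> {1..N}. k * d \<le> N}"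
        then obtain k where "j = k * d" "k \<ge> 1" "k * d \<le> N" by auto
        moreover have "k * d \<ge> 1" using \<open>k \<ge> 1\<close> d by (metis mult_le_mono nat_mult_1)
        ultimately show "j \<in> {j \<in> {1..N}. d dvd j}" by auto
      next
        fix j assume "j \<in> {j \<in> {1..N}. d dvd j}"
        then obtain m where m: "j = d * m" "1 \<le> j" "j \<le> N" by (auto elim: dvdE)
        hence "m \<ge> 1" by (cases m) auto
        moreover have "1 * m \<le> d * m" using d by (rule mult_le_mono1)
        hence "m \<le> j" using m(1) by simp
        hence "m \<le> N" using m(3) by linarith
        ultimately show "j \<in> (\<lambda>k. k * d) ` {k \<in> {1..N}. k * d \<le> N}"
          using m by (intro image_eqI[of _ _ m]) (auto simp: mult.commute)
      qed
    qed
  qed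
  also have "\<dots> = cc q d N" unfolding cc_def by (rule sum.inter_filter) simp
  finally show ?thesis .
qed

lemma main_identity:
  fixes q N :: nat
  assumes q: "card (UNIV :: 'a::{finite,field_gcd} set) = q"
  shows "N * q ^ N = (\<Sum>d\<in>{1..N}. d * card (Irr d :: 'a poly set) * cc q d N)"
proof -
  let ?M = "{f::'a poly. monic f \<and> degree f = N}"
  let ?I = "IrrLe N :: 'a poly set"
  have fM: "finite ?M" by (rule finite_monic)
  have fI: "finite ?I" by (rule finite_IrrLe)
  have "N * q ^ N = (\<Sum>f\<in>?M. degree f)" using card_monic[of N, where 'a='a] q by simp
  also have "\<dots> = (\<Sum>f\<in>?M. \<Sum>P\<in>?I. \<Sum>k\<in>{1..N}. if P ^ k dvd f then degree P else 0)"
    by (rule sum.cong) (use degree_decomp in auto)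
  also have "\<dots> = (\<Sum>P\<in>?I. \<Sum>f\<in>?M. \<Sum>k\<in>{1..N}. if P ^ k dvd f then degree P else 0)"
    by (rule sum.swap)
  also have "\<dots> = (\<Sum>P\<in>?I. \<Sum>k\<in>{1..N}. \<Sum>f\<in>?M. if P ^ k dvd f then degree P else 0)"
    by (rule sum.cong[OF refl], rule sum.swap)
  also have "\<dots> = (\<Sum>P\<in>?I. \<Sum>k\<in>{1..N}. degree P * (if k * degree P \<le> N then q ^ (N - k * degree P) else 0))"
  proof (intro sum.cong refl)
    fix P k assume P: "P \<in> ?I"
    have "(\<Sum>f\<in>?M. if P ^ k dvd f then degree P else 0) = (\<Sum>f\<in>{f\<in>?M. P ^ k dvd f}. degree P)"
      by (rule sum.inter_filter[symmetric, OF fM])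
    also have "\<dots> = degree P * card {f. monic f \<and> degree f = N \<and> P ^ k dvd f}"
      by (simp add: conj_assoc)
    also have "\<dots> = degree P * (if k * degree P \<le> N then q ^ (N - k * degree P) else 0)"
      using P card_multiples[of P N k] q by (simp add: IrrLe_def)
    finally show "(\<Sum>f\<in>?M. if P ^ k dvd f then degree P else 0) =
       degree P * (if k * degree P \<le> N then q ^ (N - k * degree P) else 0)" .
  qed
  also have "\<dots> = (\<Sum>d\<in>{1..N}. \<Sum>P\<in>{P\<in>?I. degree P = d}.
                     \<Sum>k\<in>{1..N}. degree P * (if k * degree P \<le> N then q ^ (N - k * degree P) else 0))"
    by (rule sum.group[symmetric, OF fI]) (auto simp: IrrLe_def dest: irr_degree_pos)
  also have "\<dots> = (\<Sum>d\<in>{1..N}. d * card (Irr d :: 'a poly set) * cc q d N)"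
  proof (rule sum.cong[OF refl])
    fix d assume d: "d \<in> {1..N}"
    have e: "{P\<in>?I. degree P = d} = Irr d" using d by (auto simp: IrrLe_def Irr_def)
    have "(\<Sum>P\<in>{P\<in>?I. degree P = d}.
             \<Sum>k\<in>{1..N}. degree P * (if k * degree P \<le> N then q ^ (N - k * degree P) else 0))
          = (\<Sum>P\<in>(Irr d :: 'a poly set). d * (\<Sum>k\<in>{1..N}. (if k * d \<le> N then q ^ (N - k * d) else 0)))"
      unfolding e by (rule sum.cong[OF refl]) (auto simp: Irr_def sum_distrib_left)
    also have "\<dots> = card (Irr d :: 'a poly set) * (d * cc q d N)"
      using cc_reindex[of d N q] d by simp
    finally show "(\<Sum>P\<in>{P\<in>?I. degree P = d}.
             \<Sum>k\<in>{1..N}. degree P * (if k * degree P \<le> N then q ^ (N - k * degree P) else 0))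
          = d * card (Irr d :: 'a poly set) * cc q d N" by simp
  qed
  finally show ?thesis .
qed
lemma cc_Suc: "cc q d (Suc M) = (if d dvd Suc M then 1 else 0) + q * cc q d M"
proof -
  have "cc q d (Suc M) = (\<Sum>j\<in>{1..M}. if d dvd j then q ^ (Suc M - j) else 0) + (if d dvd Suc M then 1 else 0)"
    unfolding cc_def by (simp add: sum.cl_ivl_Suc)
  also have "(\<Sum>j\<in>{1..M}. if d dvd j then q ^ (Suc M - j) else 0) = q * cc q d M"
    unfolding cc_def sum_distrib_left
    by (rule sum.cong) (auto simp: Suc_diff_le)
  finally show ?thesis by simp
qed

lemma cc_big: "M < d \<Longrightarrow> cc q d M = 0"
  unfolding cc_def by (rule sum.neutral) (auto dest: dvd_imp_le)

lemma divisor_sum: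
  fixes q N :: nat
  assumes q: "card (UNIV :: 'a::{finite,field_gcd} set) = q" and N: "N \<ge> 1"
  shows "(\<Sum>d\<in>{1..N}. d * card (Irr d :: 'a poly set) * (if d dvd N then 1 else 0)) = q ^ N"
proof -
  obtain M where M: "N = Suc M" using N by (cases N) auto
  let ?p = "\<lambda>d. d * card (Irr d :: 'a poly set)"
  let ?X = "(\<Sum>d\<in>{1..Suc M}. ?p d * (if d dvd Suc M then 1 else 0))"
  have "Suc M * q ^ Suc M = (\<Sum>d\<in>{1..Suc M}. ?p d * cc q d (Suc M))"
    by (rule main_identity[OF q])
  also have "\<dots> = (\<Sum>d\<in>{1..Suc M}. ?p d * (if d dvd Suc M then 1 else 0) + q * (?p d * cc q d M))"
    by (rule sum.cong) (auto simp: cc_Suc algebra_simps)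
  also have "\<dots> = ?X + q * (\<Sum>d\<in>{1..Suc M}. ?p d * cc q d M)"
    by (simp only: sum.distrib sum_distrib_left)
  also have "(\<Sum>d\<in>{1..Suc M}. ?p d * cc q d M) = (\<Sum>d\<in>{1..M}. ?p d * cc q d M)"
    by (simp add: sum.cl_ivl_Suc cc_big)
  also have "\<dots> = M * q ^ M" by (rule main_identity[OF q, symmetric])
  finally have "Suc M * q ^ Suc M = ?X + q * (M * q ^ M)" .
  hence "?X = q ^ Suc M" by (simp add: algebra_simps)
  thus ?thesis using M by simp
qed
lemma pi_upper:
  fixes q :: nat
  assumes q: "card (UNIV :: 'a::{finite,field_gcd} set) = q" and d: "d \<ge> 1"
  shows "d * card (Irr d :: 'a poly set) \<le> q ^ d"
proof -
  have "d * card (Irr d :: 'a poly set) * (if d dvd d then 1 else 0)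
        \<le> (\<Sum>e\<in>{1..d}. e * card (Irr e :: 'a poly set) * (if e dvd d then 1 else 0))"
    by (rule member_le_sum) (use d in auto)
  thus ?thesis using divisor_sum[OF q d] by simp
qed

lemma pi_lower:
  fixes q :: nat
  assumes q: "card (UNIV :: 'a::{finite,field_gcd} set) = q" and N: "N \<ge> 1"
  shows "q ^ N \<le> N * card (Irr N :: 'a poly set) + (\<Sum>d\<in>{1..N div 2}. q ^ d)"
proof -
  let ?f = "\<lambda>e. e * card (Irr e :: 'a poly set) * (if e dvd N then 1 else 0)"
  have "q ^ N = (\<Sum>e\<in>{1..N}. ?f e)" using divisor_sum[OF q N] by simp
  also have "\<dots> = (\<Sum>e\<in>insert N {1..N div 2}. ?f e)"
  proof (rule sum.mono_neutral_right)
    show "insert N {1..N div 2} \<subseteq> {1..N}" using N by auto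
    show "\<forall>i\<in>{1..N} - insert N {1..N div 2}. ?f i = 0"
    proof
      fix e assume e: "e \<in> {1..N} - insert N {1..N div 2}"
      show "?f e = 0"
      proof (cases "e dvd N")
        case True
        then obtain m where m: "N = e * m" by (auto elim: dvdE)
        have "m \<noteq> 0" using m N by auto
        moreover have "m \<noteq> 1" using m e by auto
        ultimately have "m \<ge> 2" by simp
        hence "e * 2 \<le> N" using m by (metis mult_le_mono2)
        hence "e \<le> N div 2" by simp
        thus ?thesis using e by auto
      qed simp
    qed
  qed simp
  also have "\<dots> = ?f N + (\<Sum>e\<in>{1..N div 2}. ?f e)"
    by (rule sum.insert) (use N in auto)
  also have "\<dots> \<le> N * card (Irr N :: 'a poly set) + (\<Sum>d\<in>{1..N div 2}. q ^ d)"
  proof (rule add_mono)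
    show "(\<Sum>e\<in>{1..N div 2}. ?f e) \<le> (\<Sum>d\<in>{1..N div 2}. q ^ d)"
    proof (rule sum_mono)
      fix e assume "e \<in> {1..N div 2}"
      hence "e \<ge> 1" by simp
      thus "?f e \<le> q ^ e" using pi_upper[OF q] by (auto intro: le_trans[of _ "e * card (Irr e :: 'a poly set)"])
    qed
  qed simp
  finally show ?thesis .
qed

lemma geom_bound: "(q::nat) \<ge> 2 \<Longrightarrow> (\<Sum>d\<in>{1..g}. q ^ d) \<le> 2 * q ^ g"
proof (induction g)
  case 0 thus ?case by simp
next
  case (Suc g)
  have "(\<Sum>d\<in>{1..Suc g}. q ^ d) = (\<Sum>d\<in>{1..g}. q ^ d) + q ^ Suc g" by (simp add: sum.cl_ivl_Suc)
  also have "\<dots> \<le> 2 * q ^ g + q ^ Suc g" using Suc by simp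
  also have "2 * q ^ g \<le> q ^ Suc g" using Suc.prems by simp
  finally show ?case by simp
qed
lemma prod_mset_pm1:
  fixes f :: "'b \<Rightarrow> int"
  assumes "\<forall>Q\<in>#M. f Q = 1 \<or> f Q = -1"
  shows "(\<Prod>Q\<in>#M. f Q) * (\<Prod>Q\<in>#M. f Q) = 1"
  using assms
proof (induction M)
  case empty thus ?case by simp
next
  case (add a M)
  have "f a * f a = 1" using add.prems by auto
  moreover have "(\<Prod>Q\<in>#M. f Q) * (\<Prod>Q\<in>#M. f Q) = 1" using add by auto
  ultimately show ?case by (simp add: algebra_simps)
qed

lemma chi_square:
  fixes P h :: "'a::field_gcd poly"
  assumes P: "irreducible P" and h: "h \<noteq> 0" and dh: "degree h < degree P"
  shows "chi P (h ^ 2) = 1"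
proof -
  have pf: "prime_factorization (h ^ 2) = prime_factorization h + prime_factorization h"
    using h by (simp add: power2_eq_square prime_factorization_mult)
  have pm: "\<forall>Q\<in>#prime_factorization h. poly_legendre P Q = 1 \<or> poly_legendre P Q = -1"
  proof
    fix Q assume Q: "Q \<in># prime_factorization h"
    hence Qp: "prime Q" and Qd: "Q dvd h" by (auto simp: in_prime_factors_iff)
    have "\<not> Q dvd P"
    proof
      assume "Q dvd P"
      then obtain c where c: "P = Q * c" by (auto elim: dvdE)
      have "\<not> is_unit Q" using Qp by (simp add: prime_def prime_elem_def)
      hence "is_unit c" using P c by (auto simp: irreducible_def)
      hence "c \<noteq> 0" by auto
      hence "degree c = 0" using \<open>is_unit c\<close> by (simp add: is_unit_iff_degree)
      moreover have "c \<noteq> 0" "Q \<noteq> 0" using c P Qp by auto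
      ultimately have "degree P = degree Q" using c by (simp add: degree_mult_eq)
      moreover have "degree Q \<le> degree h" using Qd h by (rule dvd_imp_degree_le)
      ultimately show False using dh by simp
    qed
    thus "poly_legendre P Q = 1 \<or> poly_legendre P Q = -1" by (simp add: poly_legendre_def)
  qed
  show ?thesis unfolding chi_def poly_jacobi_def pf
    using prod_mset_pm1[OF pm] by simp
qed
lemma square_inj: "inj_on (\<lambda>h::'a::field poly. h ^ 2) {h. monic h}"
proof (rule inj_onI)
  fix h k :: "'a poly" assume h: "h \<in> {h. monic h}" and k: "k \<in> {h. monic h}" and e: "h ^ 2 = k ^ 2"
  have "(h - k) * (h + k) = 0" using e by (simp add: algebra_simps power2_eq_square)
  hence "h = k \<or> h = - k" by (auto simp: eq_neg_iff_add_eq_0)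
  thus "h = k"
  proof
    assume hk: "h = - k"
    hence "lead_coeff h = - lead_coeff k" by simp
    hence m1: "(1::'a) = - 1" using h k by (simp add: monic_def)
    have "- k = smult (-1) k" by simp
    also have "\<dots> = smult 1 k" by (simp only: m1[symmetric])
    also have "\<dots> = k" by simp
    finally show "h = k" using hk by simp
  qed
qed

lemma square_set_even:
  "{f::'a::field poly. monic f \<and> degree f = 2 * m \<and> is_monic_square f} =
   (\<lambda>h. h ^ 2) ` {h. monic h \<and> degree h = m}"
proof (intro equalityI subsetI)
  fix f :: "'a poly" assume "f \<in> {f. monic f \<and> degree f = 2 * m \<and> is_monic_square f}"
  then obtain h where f: "degree f = 2 * m" "monic h" "f = h ^ 2" by (auto simp: is_monic_square_def)
  have "h \<noteq> 0" using f by (auto simp: monic_def)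
  hence "degree h = m" using f by (simp add: degree_power_eq)
  thus "f \<in> (\<lambda>h. h ^ 2) ` {h. monic h \<and> degree h = m}" using f by auto
next
  fix f :: "'a poly" assume "f \<in> (\<lambda>h. h ^ 2) ` {h. monic h \<and> degree h = m}"
  then obtain h where h: "f = h ^ 2" "monic h" "degree h = m" by auto
  have "h \<noteq> 0" using h by (auto simp: monic_def)
  hence "degree f = 2 * m" using h by (simp add: degree_power_eq)
  moreover have "lead_coeff f = 1" using h by (simp add: monic_def lead_coeff_power)
  ultimately show "f \<in> {f. monic f \<and> degree f = 2 * m \<and> is_monic_square f}"
    using h by (auto simp: is_monic_square_def monic_def)
qed

lemma square_set_odd:
  assumes "odd n"
  shows "{f::'a::field poly. monic f \<and> degree f = n \<and> is_monic_square f} = {}"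
proof (rule ccontr)
  assume "{f::'a poly. monic f \<and> degree f = n \<and> is_monic_square f} \<noteq> {}"
  then obtain h :: "'a poly" where h: "monic h" "degree (h ^ 2) = n" by (auto simp: is_monic_square_def)
  have "h \<noteq> 0" using h by (auto simp: monic_def)
  hence "n = 2 * degree h" using h by (simp add: degree_power_eq)
  thus False using assms by simp
qed

lemma inner_sum:
  fixes P :: "'a::{finite,field_gcd} poly" and q :: nat
  assumes q: "card (UNIV :: 'a set) = q" and P: "irreducible P" and n: "n \<le> degree P \<or> n < degree P"
    and nP: "n < 2 * degree P"
  shows "(\<Sum>f\<in>{f :: 'a poly. monic f \<and> degree f = n \<and> is_monic_square f}.
            real_of_int (chi P f) * real q powr (- real n / 2)) = (if even n then 1 else 0)"
proof (cases "even n")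
  case False thus ?thesis by (simp only: square_set_odd[OF False] sum.empty if_False)
next
  case True
  then obtain m where nm: "n = 2 * m" by (auto elim: evenE)
  have q0: "real q > 0" using q finite_UNIV[where 'a='a] by (metis card_gt_0_iff UNIV_not_empty of_nat_0_less_iff)
  have inj: "inj_on (\<lambda>h::'a poly. h ^ 2) {h. monic h \<and> degree h = m}"
    by (rule inj_on_subset[OF square_inj]) auto
  have "(\<Sum>f\<in>{f :: 'a poly. monic f \<and> degree f = n \<and> is_monic_square f}.
            real_of_int (chi P f) * real q powr (- real n / 2))
        = (\<Sum>h\<in>{h::'a poly. monic h \<and> degree h = m}. real_of_int (chi P (h ^ 2)) * real q powr (- real m))"
    unfolding nm square_set_even by (subst sum.reindex[OF inj]) simp
  also have "\<dots> = (\<Sum>h\<in>{h::'a poly. monic h \<and> degree h = m}. real q powr (- real m))"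
  proof (rule sum.cong[OF refl])
    fix h assume h: "h \<in> {h::'a poly. monic h \<and> degree h = m}"
    have "h \<noteq> 0" using h by (auto simp: monic_def)
    moreover have "degree h < degree P" using h nm nP by simp
    ultimately show "real_of_int (chi P (h ^ 2)) * real q powr (- real m) = real q powr (- real m)"
      using chi_square[OF P] by simp
  qed
  also have "\<dots> = real q ^ m * real q powr (- real m)"
    using card_monic[of m, where 'a='a] q by simp
  also have "\<dots> = 1" using q0 by (simp add: powr_minus powr_realpow)
  finally show ?thesis using True by simp
qed

lemma count_evens: "(\<Sum>n=0..g. (if even n then 1 else 0::real)) = real (g div 2 + 1)"
proof (induction g)
  case 0 thus ?case by simp
next
  case (Suc g)
  thus ?case by (simp add: sum.cl_ivl_Suc)
qed
theorem proposition3p1: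
  fixes q :: nat
  assumes "card (UNIV :: 'a::{finite,field_gcd} set) = q" and "odd q" and "q mod 4 = 1"
  shows "(\<lambda>g::nat.
      (\<Sum>P\<in>{P :: 'a poly. monic P \<and> irreducible P \<and> degree P = 2*g+1}.
         \<Sum>n=0..g. \<Sum>f\<in>{f :: 'a poly. monic f \<and> degree f = n \<and> is_monic_square f}.
            real_of_int (chi P f) * real q powr (- real n / 2))
      - (real q ^ (2*g+1) / real (2*g+1)) * real (g div 2 + 1))
    \<in> O(\<lambda>g. sqrt (real q ^ (2*g+1)) / real (2*g+1) * real g)"
proof -
  note q = assms(1)
  have q2: "q \<ge> 2"
  proof -
    have "card {0, 1::'a} \<le> card (UNIV :: 'a set)" by (rule card_mono) auto
    thus ?thesis using q by simp
  qed
  have LHS: "(\<Sum>P\<in>{P :: 'a poly. monic P \<and> irreducible P \<and> degree P = 2*g+1}.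
         \<Sum>n=0..g. \<Sum>f\<in>{f :: 'a poly. monic f \<and> degree f = n \<and> is_monic_square f}.
            real_of_int (chi P f) * real q powr (- real n / 2))
         = real (card (Irr (2*g+1) :: 'a poly set)) * real (g div 2 + 1)" for g
  proof -
    have "(\<Sum>P\<in>{P :: 'a poly. monic P \<and> irreducible P \<and> degree P = 2*g+1}.
         \<Sum>n=0..g. \<Sum>f\<in>{f :: 'a poly. monic f \<and> degree f = n \<and> is_monic_square f}.
            real_of_int (chi P f) * real q powr (- real n / 2))
        = (\<Sum>P\<in>(Irr (2*g+1) :: 'a poly set). real (g div 2 + 1))"
      unfolding Irr_def
    proof (rule sum.cong[OF refl])
      fix P :: "'a poly" assume P: "P \<in> {P. monic P \<and> irreducible P \<and> degree P = 2*g+1}"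
      have "(\<Sum>n=0..g. \<Sum>f\<in>{f :: 'a poly. monic f \<and> degree f = n \<and> is_monic_square f}.
            real_of_int (chi P f) * real q powr (- real n / 2)) = (\<Sum>n=0..g. (if even n then 1 else 0::real))"
        by (rule sum.cong[OF refl], rule inner_sum[OF q]) (use P in auto)
      thus "(\<Sum>n=0..g. \<Sum>f\<in>{f :: 'a poly. monic f \<and> degree f = n \<and> is_monic_square f}.
            real_of_int (chi P f) * real q powr (- real n / 2)) = real (g div 2 + 1)"
        by (simp only: count_evens)
    qed
    thus ?thesis by simp
  qed
  show ?thesis
  proof (rule bigoI[where c = 4])
    show "\<forall>\<^sub>F g in at_top. norm ((\<Sum>P\<in>{P :: 'a poly. monic P \<and> irreducible P \<and> degree P = 2*g+1}.
         \<Sum>n=0..g. \<Sum>f\<in>{f :: 'a poly. monic f \<and> degree f = n \<and> is_monic_square f}.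
            real_of_int (chi P f) * real q powr (- real n / 2))
      - (real q ^ (2*g+1) / real (2*g+1)) * real (g div 2 + 1))
      \<le> 4 * norm (sqrt (real q ^ (2*g+1)) / real (2*g+1) * real g)"
    proof (rule eventually_at_top_linorderI[of 1])
      fix g :: nat assume g: "g \<ge> 1"
      define N where "N = 2 * g + 1"
      define c where "c = card (Irr N :: 'a poly set)"
      have N1: "N \<ge> 1" and Nd: "N div 2 = g" by (auto simp: N_def)
      have up: "N * c \<le> q ^ N" unfolding c_def by (rule pi_upper[OF q N1])
      have lo: "q ^ N \<le> N * c + 2 * q ^ g"
        using pi_lower[OF q N1] geom_bound[OF q2, of g] Nd unfolding c_def by simp
      have up': "real N * real c \<le> real q ^ N" using of_nat_mono[OF up, where 'a=real] by simp
      have lo': "real q ^ N \<le> real N * real c + 2 * real q ^ g"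
        using of_nat_mono[OF lo, where 'a=real] by simp
      have Npos: "real N > 0" using N1 by simp
      have A: "real (g div 2 + 1) \<le> 2 * real g" using g by simp
      have sq: "real q ^ g \<le> sqrt (real q ^ N)"
      proof (rule real_le_rsqrt)
        have "(real q ^ g)\<^sup>2 = real q ^ (2 * g)" by (simp add: power_mult[symmetric] mult.commute)
        also have "\<dots> \<le> real q ^ N" using q2 by (intro power_increasing) (auto simp: N_def)
        finally show "(real q ^ g)\<^sup>2 \<le> real q ^ N" .
      qed
      have "real c * real (g div 2 + 1) - real q ^ N / real N * real (g div 2 + 1)
            = (real N * real c - real q ^ N) / real N * real (g div 2 + 1)"
        using Npos by (simp add: field_simps)
      hence "\<bar>real c * real (g div 2 + 1) - real q ^ N / real N * real (g div 2 + 1)\<bar>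
            = \<bar>real N * real c - real q ^ N\<bar> / real N * real (g div 2 + 1)"
        using Npos by (simp add: abs_mult)
      also have "\<dots> \<le> (2 * real q ^ g) / real N * (2 * real g)"
      proof (intro mult_mono divide_right_mono)
        show "\<bar>real N * real c - real q ^ N\<bar> \<le> 2 * real q ^ g" using up' lo' by simp
      qed (use A Npos in auto)
      also have "\<dots> \<le> (2 * sqrt (real q ^ N)) / real N * (2 * real g)"
        using sq Npos g by (intro mult_right_mono divide_right_mono) auto
      also have "\<dots> = 4 * (sqrt (real q ^ N) / real N * real g)" by simp
      finally have "\<bar>real c * real (g div 2 + 1) - real q ^ N / real N * real (g div 2 + 1)\<bar>
          \<le> 4 * (sqrt (real q ^ N) / real N * real g)" .
      thus "norm ((\<Sum>P\<in>{P :: 'a poly. monic P \<and> irreducible P \<and> degree P = 2*g+1}.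
         \<Sum>n=0..g. \<Sum>f\<in>{f :: 'a poly. monic f \<and> degree f = n \<and> is_monic_square f}.
            real_of_int (chi P f) * real q powr (- real n / 2))
      - (real q ^ (2*g+1) / real (2*g+1)) * real (g div 2 + 1))
      \<le> 4 * norm (sqrt (real q ^ (2*g+1)) / real (2*g+1) * real g)"
        unfolding LHS using Npos unfolding c_def N_def by simp
    qed
  qed
qed
end
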